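(* Assume CH. Let $\mathcal{I}$ be a $\sigma$-ideal on $\mathbb{R}$ satisfying the standing assumptions. Then there exists a partition of $\mathbb{R}$ into $\mathfrak{c}$ many pairwise disjoint strong $\mathcal{I}$-Luzin sets.
   Context: Standing assumptions on $\mathcal{I}$: $\mathcal{I}$ is a $\sigma$-ideal of subsets of $\mathbb{R}$ such that $\mathbb{R}\notin\mathcal{I}$; $x+I\in\mathcal{I}$ and $xI\in\mathcal{I}$ for all $x\in\mathbb{R}$, $I\in\mathcal{I}$; every member of $\mathcal{I}$ is contained in a Borel member of $\mathcal{I}$; and for all Borel $A,B\notin\mathcal{I}$ the set $A-B$ has nonempty interior. A set $L\subseteq\mathbb{R}$ is $\mathcal{I}$-Luzin if $|L|=\mathfrak{c}$ and $L\cap I$ is countable for every $I\in\mathcal{I}$; it is strong $\mathcal{I}$-Luzin if moreover $L\cap B$ is uncountable for every Borel set $B\notin\mathcal{I}$. *)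

theory Defs
  imports "HOL-Analysis.Analysis" "HOL-Library.Equipollence"
begin

definition CH :: bool where
  "CH \<longleftrightarrow> (\<forall>A :: real set. \<not> countable A \<longrightarrow> A \<approx> (UNIV :: real set))"

definition sigma_ideal :: "real set set \<Rightarrow> bool" where
  "sigma_ideal \<I> \<longleftrightarrow>
     {} \<in> \<I> \<and>
     (\<forall>A B. A \<in> \<I> \<and> B \<subseteq> A \<longrightarrow> B \<in> \<I>) \<and>
     (\<forall>F. countable F \<and> F \<subseteq> \<I> \<longrightarrow> \<Union>F \<in> \<I>)"

definition standing_assumptions :: "real set set \<Rightarrow> bool" where
  "standing_assumptions \<I> \<longleftrightarrow>
     sigma_ideal \<I> \<and>
     (UNIV :: real set) \<notin> \<I> \<and>
     (\<forall>x I. I \<in> \<I> \<longrightarrow> (\<lambda>y. x + y) ` I \<in> \<I>) \<and>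
     (\<forall>x I. I \<in> \<I> \<longrightarrow> (\<lambda>y. x * y) ` I \<in> \<I>) \<and>
     (\<forall>I \<in> \<I>. \<exists>B \<in> sets borel. B \<in> \<I> \<and> I \<subseteq> B) \<and>
     (\<forall>A B. A \<in> sets borel \<and> B \<in> sets borel \<and> A \<notin> \<I> \<and> B \<notin> \<I> \<longrightarrow>
        interior {a - b | a b. a \<in> A \<and> b \<in> B} \<noteq> {})"

definition I_Luzin :: "real set set \<Rightarrow> real set \<Rightarrow> bool" where
  "I_Luzin \<I> L \<longleftrightarrow> L \<approx> (UNIV :: real set) \<and> (\<forall>I \<in> \<I>. countable (L \<inter> I))"

definition strong_I_Luzin :: "real set set \<Rightarrow> real set \<Rightarrow> bool" where
  "strong_I_Luzin \<I> L \<longleftrightarrow> I_Luzin \<I> L \<and>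
     (\<forall>B \<in> sets borel. B \<notin> \<I> \<longrightarrow> \<not> countable (L \<inter> B))"

end

theory Submission
  imports Defs
begin


lemma surj_sigma: "\<exists>\<sigma>::real \<Rightarrow> nat \<Rightarrow> real. surj \<sigma>"
proof -
  obtain e :: "nat set \<Rightarrow> real" where e: "bij e"
    using nat_sets_eqpoll_reals unfolding eqpoll_def by blast
  define D :: "nat set \<Rightarrow> nat \<Rightarrow> nat set" where "D S n = {m. prod_encode (n,m) \<in> S}" for S n
  have D: "surj D"
  proof (rule surjI)
    fix f :: "nat \<Rightarrow> nat set"
    show "D {k. snd (prod_decode k) \<in> f (fst (prod_decode k))} = f"
      by (auto simp: D_def fun_eq_iff)
  qed
  define \<sigma> where "\<sigma> x n = e (D (inv e x) n)" for x n
  have "\<exists>x. \<phi> = \<sigma> x" for \<phi>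
  proof -
    obtain S where S: "D S = (\<lambda>n. inv e (\<phi> n))" using D by (metis surjD)
    have "\<sigma> (e S) = \<phi>"
    proof
      fix n
      have "inv e (e S) = S" using e by (simp add: bij_is_inj inv_f_f)
      then have "\<sigma> (e S) n = e (inv e (\<phi> n))" using S by (simp add: \<sigma>_def)
      also have "\<dots> = \<phi> n" using e by (simp add: bij_is_surj surj_f_inv_f)
      finally show "\<sigma> (e S) n = \<phi> n" .
    qed
    then show ?thesis by metis
  qed
  then have "surj \<sigma>" by (simp add: surj_def)
  then show ?thesis by blast
qed

definition small :: "'a set \<Rightarrow> bool" where
  "small A \<longleftrightarrow> (\<exists>g::real \<Rightarrow> 'a. A \<subseteq> range g)"

lemma small_range: "small (range (h::real \<Rightarrow> 'a))" unfolding small_def by (rule exI[of _ h]) simp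

lemma small_subset: "small B \<Longrightarrow> A \<subseteq> B \<Longrightarrow> small A"
  unfolding small_def by (meson order_trans)

lemma small_image: "small A \<Longrightarrow> small (f ` A)"
proof -
  assume "small A"
  then obtain g :: "real \<Rightarrow> _" where "A \<subseteq> range g" unfolding small_def by (elim exE)
  then have "f ` A \<subseteq> range (f \<circ> g)" by auto
  then show ?thesis unfolding small_def by (rule exI[where x="f \<circ> g"])
qed

lemma small_UN:
  fixes P :: "real \<Rightarrow> 'a set"
  assumes "\<And>c. c \<in> C \<Longrightarrow> small (P c)"
  shows "small (\<Union>c\<in>(C::real set). P c)"
proof -
  obtain \<sigma>::"real \<Rightarrow> nat \<Rightarrow> real" where s: "surj \<sigma>" using surj_sigma by blast
  have ex: "\<forall>c\<in>C. \<exists>g::real \<Rightarrow> 'a. P c \<subseteq> range g"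
  proof
    fix c assume "c \<in> C"
    from assms[OF this] show "\<exists>g::real \<Rightarrow> 'a. P c \<subseteq> range g" unfolding small_def .
  qed
  obtain g :: "real \<Rightarrow> real \<Rightarrow> 'a" where g: "\<forall>c\<in>C. P c \<subseteq> range (g c)" using bchoice[OF ex] by (elim exE) iprover
  have "(\<Union>c\<in>C. P c) \<subseteq> range (\<lambda>x. g (\<sigma> x 0) (\<sigma> x 1))"
  proof
    fix y assume "y \<in> (\<Union>c\<in>C. P c)"
    then obtain c where c: "c \<in> C" "y \<in> P c" by (elim UN_E)
    then have "y \<in> range (g c)" using g by (meson subsetD)
    then obtain z where z: "y = g c z" by (elim rangeE)
    obtain x where x: "\<sigma> x = (\<lambda>n. if n = 0 then c else z)" using s by (metis surjD)
    then have "\<sigma> x 0 = c" "\<sigma> x 1 = z" by auto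
    then have "y = (\<lambda>x. g (\<sigma> x 0) (\<sigma> x 1)) x" using z by simp
    moreover have "(\<lambda>x. g (\<sigma> x 0) (\<sigma> x 1)) x \<in> range (\<lambda>x. g (\<sigma> x 0) (\<sigma> x 1))" by (rule rangeI)
    ultimately show "y \<in> range (\<lambda>x. g (\<sigma> x 0) (\<sigma> x 1))" by (simp only:)
  qed
  then show ?thesis unfolding small_def by (rule exI[where x="\<lambda>x. g (\<sigma> x 0) (\<sigma> x 1)"])
qed

lemma small_Un: "small A \<Longrightarrow> small B \<Longrightarrow> small (A \<union> B)"
proof -
  assume "small A" "small B"
  then have "small (\<Union>c\<in>{0::real,1}. if c = 0 then A else B)"
    by (intro small_UN) auto
  then show ?thesis by (rule small_subset) auto
qed

lemma small_seqs:
  assumes "small A"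
  shows "small {f :: nat \<Rightarrow> 'a. range f \<subseteq> A}"
proof -
  obtain \<sigma>::"real \<Rightarrow> nat \<Rightarrow> real" where s: "surj \<sigma>" using surj_sigma by blast
  obtain g where g: "A \<subseteq> range (g::real \<Rightarrow> 'a)" using assms unfolding small_def by (elim exE)
  have "{f :: nat \<Rightarrow> 'a. range f \<subseteq> A} \<subseteq> range (\<lambda>x. g \<circ> \<sigma> x)"
  proof
    fix f :: "nat \<Rightarrow> 'a" assume "f \<in> {f. range f \<subseteq> A}"
    then have "\<forall>n. \<exists>y. f n = g y" using g by blast
    then obtain h where h: "\<And>n. f n = g (h n)" by metis
    obtain x where "\<sigma> x = h" using s by (metis surjD)
    then have "f = g \<circ> \<sigma> x" using h by (auto simp: fun_eq_iff)
    then show "f \<in> range (\<lambda>x. g \<circ> \<sigma> x)" by blast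
  qed
  then show ?thesis unfolding small_def by (rule exI[where x="\<lambda>x. g \<circ> \<sigma> x"])
qed



unbundle cardinal_syntax

lemma CH_wellorder:
  assumes "CH"
  shows "\<exists>lt::real\<Rightarrow>real\<Rightarrow>bool. wf {(x,y). lt x y} \<and> (\<forall>x y. lt x y \<or> x = y \<or> lt y x)
          \<and> (\<forall>x y z. lt x y \<longrightarrow> lt y z \<longrightarrow> lt x z) \<and> (\<forall>a. countable {x. lt x a})"
proof -
  define r where "r = card_of (UNIV::real set)"
  have wo: "well_order_on UNIV r" unfolding r_def by (rule card_of_well_order_on)
  then have lin: "linear_order_on UNIV r" and wf0: "wf (r - Id)" unfolding well_order_on_def by auto
  then have tot: "total_on UNIV r" and tr: "trans r" and an: "antisym r"
    unfolding linear_order_on_def partial_order_on_def preorder_on_def by auto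
  define lt where "lt x y \<longleftrightarrow> (x,y) \<in> r \<and> x \<noteq> y" for x y
  have "{(x,y). lt x y} = r - Id" unfolding lt_def by auto
  with wf0 have 1: "wf {(x,y). lt x y}" by simp
  have 2: "\<forall>x y. lt x y \<or> x = y \<or> lt y x" using tot unfolding total_on_def lt_def by auto
  have 3: "\<forall>x y z. lt x y \<longrightarrow> lt y z \<longrightarrow> lt x z"
  proof (intro allI impI)
    fix x y z assume a: "lt x y" "lt y z"
    then have "(x,z) \<in> r" using tr unfolding lt_def trans_def by blast
    moreover have "x \<noteq> z"
    proof
      assume "x = z"
      then have "(x,y) \<in> r" "(y,x) \<in> r" using a unfolding lt_def by auto
      then have "x = y" using an unfolding antisym_def by blast
      then show False using a unfolding lt_def by auto
    qed
    ultimately show "lt x z" unfolding lt_def by simp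
  qed
  have 4: "countable {x. lt x a}" for a
  proof (rule ccontr)
    assume nc: "\<not> countable {x. lt x a}"
    have eq: "{x. lt x a} = underS r a" unfolding lt_def underS_def by auto
    have "Card_order r" unfolding r_def by (rule card_of_Card_order)
    moreover have "a \<in> Field r" unfolding r_def Field_card_of by simp
    ultimately have "|underS r a| <o r" by (rule card_of_underS)
    moreover have "underS r a \<approx> (UNIV::real set)" using nc assms eq unfolding CH_def by auto
    then have "|underS r a| =o r" unfolding r_def eqpoll_iff_card_of_ordIso .
    ultimately show False using not_ordLess_ordIso by blast
  qed
  show ?thesis using 1 2 3 4 by blast
qed

locale wo_real =
  fixes lt :: "real \<Rightarrow> real \<Rightarrow> bool"
  assumes wf_lt: "wf {(x,y). lt x y}"
    and tri: "\<And>x y. lt x y \<or> x = y \<or> lt y x"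
    and trans_lt: "\<And>x y z. lt x y \<Longrightarrow> lt y z \<Longrightarrow> lt x z"
    and ctbl: "\<And>a. countable {x. lt x a}"
begin

lemma irrefl: "\<not> lt x x"
  using wf_lt by (metis (no_types, lifting) case_prodI mem_Collect_eq wf_not_refl)

lemma bound:
  assumes "countable S"
  shows "\<exists>\<eta>. \<forall>s\<in>S. lt s \<eta>"
proof -
  have c: "countable (S \<union> (\<Union>s\<in>S. {x. lt x s}))" using assms ctbl by auto
  have "S \<union> (\<Union>s\<in>S. {x. lt x s}) \<noteq> UNIV"
  proof
    assume "S \<union> (\<Union>s\<in>S. {x. lt x s}) = UNIV"
    with c have "countable (UNIV::real set)" by simp
    then show False using uncountable_UNIV_real by simp
  qed
  then obtain \<eta> where "\<eta> \<notin> S \<union> (\<Union>s\<in>S. {x. lt x s})" by blast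
  then have "\<forall>s\<in>S. lt s \<eta>" using tri by blast
  then show ?thesis by blast
qed

end




context wo_real begin

inductive inF :: "real \<Rightarrow> real set \<Rightarrow> bool" where
  base: "X \<in> insert {} (range atMost) \<Longrightarrow> inF \<alpha> X"
| compl: "lt \<beta> \<alpha> \<Longrightarrow> inF \<beta> X \<Longrightarrow> inF \<alpha> (- X)"
| un: "(\<And>n::nat. \<exists>\<beta>. lt \<beta> \<alpha> \<and> inF \<beta> (f n)) \<Longrightarrow> inF \<alpha> (\<Union>n. f n)"

lemma small_base: "small (insert {} (range (atMost :: real \<Rightarrow> real set)))"
proof -
  have "small (range (\<lambda>_::real. {}::real set))" by (rule small_range)
  moreover have "small (range (atMost :: real \<Rightarrow> real set))" by (rule small_range)
  ultimately have "small (range (\<lambda>_::real. {}::real set) \<union> range (atMost :: real \<Rightarrow> real set))"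
    by (rule small_Un)
  then show ?thesis by (rule small_subset) auto
qed

lemma stage_small: "small {X. inF \<alpha> X}"
  using wf_lt
proof (induction \<alpha> rule: wf_induct_rule)
  case (less \<alpha>)
  define Pre where "Pre = (\<Union>\<beta>\<in>{\<beta>. lt \<beta> \<alpha>}. {X. inF \<beta> X})"
  have sP: "small Pre" unfolding Pre_def
    by (rule small_UN) (use less in auto)
  have sub: "{X. inF \<alpha> X} \<subseteq> insert {} (range atMost) \<union> uminus ` Pre \<union> (\<lambda>f. \<Union> (range f)) ` {f::nat \<Rightarrow> real set. range f \<subseteq> Pre}"
  proof
    fix X assume "X \<in> {X. inF \<alpha> X}"
    then have "inF \<alpha> X" by simp
    then show "X \<in> insert {} (range atMost) \<union> uminus ` Pre \<union> (\<lambda>f. \<Union> (range f)) ` {f::nat \<Rightarrow> real set. range f \<subseteq> Pre}"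
    proof cases
      case (base)
      then show ?thesis by (intro UnI1)
    next
      case (compl \<beta> Y)
      then have "Y \<in> Pre" unfolding Pre_def by (intro UN_I[of \<beta>]) simp_all
      then have "X \<in> uminus ` Pre" by (intro image_eqI[of X uminus Y, OF compl(1)])
      then show ?thesis by (intro UnI1 UnI2)
    next
      case (un f)
      have "f n \<in> Pre" for n
      proof -
        obtain \<beta> where "lt \<beta> \<alpha>" "inF \<beta> (f n)" using un(2)[of n] by (elim exE conjE)
        then show ?thesis unfolding Pre_def by (intro UN_I[of \<beta>]) simp_all
      qed
      then have "range f \<subseteq> Pre" by (intro subsetI) (elim rangeE, simp)
      then have mem: "f \<in> {f::nat \<Rightarrow> real set. range f \<subseteq> Pre}" by simp
      have eq: "X = (\<lambda>f. \<Union> (range f)) f" using un(1) by simp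
      have "X \<in> (\<lambda>f. \<Union> (range f)) ` {f::nat \<Rightarrow> real set. range f \<subseteq> Pre}" by (rule image_eqI[of X "\<lambda>f::nat \<Rightarrow> real set. \<Union> (range f)" f, OF eq mem])
      then show ?thesis by (intro UnI2)
    qed
  qed
  have "small (insert {} (range atMost) \<union> uminus ` Pre \<union> (\<lambda>f. \<Union> (range f)) ` {f::nat \<Rightarrow> real set. range f \<subseteq> Pre})"
    by (intro small_Un small_image small_seqs sP small_base)
  then show ?case using sub by (rule small_subset)
qed

definition FF :: "real set set" where "FF = {X. \<exists>\<alpha>. inF \<alpha> X}"

lemma FF_small: "small FF"
proof -
  have "FF = (\<Union>\<alpha>\<in>(UNIV::real set). {X. inF \<alpha> X})" unfolding FF_def by blast
  moreover have "small (\<Union>\<alpha>\<in>(UNIV::real set). {X. inF \<alpha> X})"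
    by (rule small_UN) (rule stage_small)
  ultimately show ?thesis by simp
qed

lemma sets_borel_eq: "sets borel = sigma_sets UNIV (range (\<lambda>a::real. {..a}))"
  by (subst borel_eq_atMost) simp

lemma borel_FF: "sets borel \<subseteq> FF"
proof
  fix X :: "real set" assume "X \<in> sets borel"
  then have "X \<in> sigma_sets UNIV (range (\<lambda>a::real. {..a}))" by (simp add: sets_borel_eq)
  then show "X \<in> FF" unfolding FF_def mem_Collect_eq
  proof induction
    case (Basic a)
    then have "inF 0 a" by (intro base) auto
    then show ?case by (rule exI)
  next
    case Empty
    have "inF 0 {}" by (intro base) auto
    then show ?case by (rule exI)
  next
    case (Compl a)
    then obtain \<beta> where b: "inF \<beta> a" by (elim exE)
    obtain \<alpha> where "\<forall>s\<in>{\<beta>}. lt s \<alpha>" using bound[of "{\<beta>}"] by auto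
    then have "lt \<beta> \<alpha>" by simp
    then have "inF \<alpha> (- a)" using b by (rule compl)
    moreover have "UNIV - a = - a" by (rule Compl_eq_Diff_UNIV[symmetric])
    ultimately show ?case by (intro exI[of _ \<alpha>]) simp
  next
    case (Union a)
    then have ex: "\<forall>i. \<exists>\<beta>. inF \<beta> (a i)" by (intro allI) 
    obtain \<beta> :: "nat \<Rightarrow> real" where b: "\<forall>i. inF (\<beta> i) (a i)" using choice[OF ex] by (elim exE) iprover
    obtain \<alpha> where al: "\<forall>s\<in>range \<beta>. lt s \<alpha>" using bound[of "range \<beta>"] by auto
    have "inF \<alpha> (\<Union>i. a i)"
    proof (rule un)
      fix n show "\<exists>\<beta>'. lt \<beta>' \<alpha> \<and> inF \<beta>' (a n)"
        using al b by (intro exI[of _ "\<beta> n"]) simp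
    qed
    then show ?case by (rule exI)
  qed
qed

end



locale constr = wo_real +
  fixes I :: "real set set"
  assumes SA: "standing_assumptions I"
    and CHa: "CH"
begin

lemma sa: "sigma_ideal I" "(UNIV::real set) \<notin> I" "\<forall>x J. J \<in> I \<longrightarrow> (\<lambda>y. x + y) ` J \<in> I"
   "\<forall>J\<in>I. \<exists>B\<in>sets borel. B \<in> I \<and> J \<subseteq> B"
   "\<forall>A B. A \<in> sets borel \<and> B \<in> sets borel \<and> A \<notin> I \<and> B \<notin> I \<longrightarrow>
        interior {a - b | a b. a \<in> A \<and> b \<in> B} \<noteq> {}"
  using SA unfolding standing_assumptions_def by auto

lemma si: "{} \<in> I" "\<forall>A B. A \<in> I \<and> B \<subseteq> A \<longrightarrow> B \<in> I" "\<forall>F. countable F \<and> F \<subseteq> I \<longrightarrow> \<Union>F \<in> I"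
  using sa(1) unfolding sigma_ideal_def by auto

lemma I_sub: "A \<in> I \<Longrightarrow> B \<subseteq> A \<Longrightarrow> B \<in> I"
  using si(2) by blast

lemma I_Union: "countable F \<Longrightarrow> F \<subseteq> I \<Longrightarrow> \<Union>F \<in> I"
  using si(3) by blast

lemma UNIV_notin: "(UNIV::real set) \<notin> I"
  by (rule sa(2))

lemma I_Un: "A \<in> I \<Longrightarrow> B \<in> I \<Longrightarrow> A \<union> B \<in> I"
proof -
  assume "A \<in> I" "B \<in> I"
  then have "\<Union>{A, B} \<in> I" by (intro I_Union) auto
  then show ?thesis by simp
qed

lemma zero_in: "{0::real} \<in> I"
proof (rule ccontr)
  assume n: "{0::real} \<notin> I"
  have b: "{0::real} \<in> sets borel" by (rule borel_closed) simp
  have "interior {a - b | a b. a \<in> {0::real} \<and> b \<in> {0::real}} \<noteq> {}"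
    using sa(5) n b by blast
  moreover have "{a - b | a b. a \<in> {0::real} \<and> b \<in> {0::real}} = {0}" by auto
  ultimately show False by simp
qed

lemma single_in: "{x::real} \<in> I"
proof -
  have "(\<lambda>y. x + y) ` {0::real} \<in> I"
    using sa(3) zero_in by blast
  then show ?thesis by simp
qed

lemma countable_in: "countable S \<Longrightarrow> S \<in> I"
proof -
  assume c: "countable S"
  have "\<Union>((\<lambda>x. {x}) ` S) \<in> I" using c single_in by (intro I_Union) auto
  then show ?thesis by simp
qed

definition E :: "real \<Rightarrow> real set" where
  "E = (SOME g. FF \<subseteq> range g)"

lemma E: "FF \<subseteq> range E"
proof -
  have "\<exists>g::real \<Rightarrow> real set. FF \<subseteq> range g" using FF_small unfolding small_def .
  then show ?thesis unfolding E_def by (rule someI_ex)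
qed

definition s :: "real \<Rightarrow> nat \<Rightarrow> real" where
  "s = (SOME \<sigma>. surj \<sigma>)"

lemma s: "surj s"
  unfolding s_def using surj_sigma by (rule someI_ex)

definition Aset :: "real \<Rightarrow> real set" where
  "Aset \<alpha> = (if E (s \<alpha> 1) \<in> sets borel \<and> E (s \<alpha> 1) \<notin> I then E (s \<alpha> 1) else UNIV)"

definition J :: "real \<Rightarrow> real set" where
  "J \<alpha> = \<Union>((E ` {\<gamma>. lt \<gamma> \<alpha>}) \<inter> I)"

lemma J_in: "J \<alpha> \<in> I"
  unfolding J_def using ctbl[of \<alpha>] by (intro I_Union) auto

lemma Aset_notin: "Aset \<alpha> \<notin> I"
  unfolding Aset_def using UNIV_notin by auto

definition H :: "(real \<Rightarrow> real) \<Rightarrow> real \<Rightarrow> real" where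
  "H f \<alpha> = (SOME p. p \<in> Aset \<alpha> \<and> p \<notin> J \<alpha> \<and> p \<notin> f ` {\<beta>. lt \<beta> \<alpha>})"

definition x :: "real \<Rightarrow> real" where
  "x = wfrec {(a,b). lt a b} H"

lemma x_eq: "x \<alpha> = (SOME p. p \<in> Aset \<alpha> \<and> p \<notin> J \<alpha> \<and> p \<notin> x ` {\<beta>. lt \<beta> \<alpha>})"
proof -
  have "x \<alpha> = H (cut x {(a,b). lt a b} \<alpha>) \<alpha>" unfolding x_def by (rule wfrec[OF wf_lt])
  moreover have "cut x {(a,b). lt a b} \<alpha> ` {\<beta>. lt \<beta> \<alpha>} = x ` {\<beta>. lt \<beta> \<alpha>}"
    by (auto simp: cut_apply)
  ultimately show ?thesis unfolding H_def by simp
qed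

lemma x_prop: "x \<alpha> \<in> Aset \<alpha> \<and> x \<alpha> \<notin> J \<alpha> \<and> x \<alpha> \<notin> x ` {\<beta>. lt \<beta> \<alpha>}"
proof -
  have "\<exists>p. p \<in> Aset \<alpha> \<and> p \<notin> J \<alpha> \<and> p \<notin> x ` {\<beta>. lt \<beta> \<alpha>}"
  proof (rule ccontr)
    assume "\<not> ?thesis"
    then have "Aset \<alpha> \<subseteq> J \<alpha> \<union> x ` {\<beta>. lt \<beta> \<alpha>}" by blast
    moreover have "J \<alpha> \<union> x ` {\<beta>. lt \<beta> \<alpha>} \<in> I"
      using J_in countable_in ctbl[of \<alpha>] by (intro I_Un) auto
    ultimately have "Aset \<alpha> \<in> I" by (rule I_sub[rotated])
    then show False using Aset_notin by simp
  qed
  then show ?thesis unfolding x_eq[of \<alpha>] by (rule someI_ex)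
qed

lemma x_inj: "inj x"
proof (rule injI)
  fix a b assume eq: "x a = x b"
  show "a = b"
  proof (rule ccontr)
    assume "a \<noteq> b"
    then have "lt a b \<or> lt b a" using tri by blast
    then show False
    proof
      assume "lt a b"
      then have "x a \<in> x ` {\<beta>. lt \<beta> b}" by simp
      then have "x b \<in> x ` {\<beta>. lt \<beta> b}" using eq by simp
      then show False using x_prop[of b] by simp
    next
      assume "lt b a"
      then have "x b \<in> x ` {\<beta>. lt \<beta> a}" by simp
      then have "x a \<in> x ` {\<beta>. lt \<beta> a}" using eq by simp
      then show False using x_prop[of a] by simp
    qed
  qed
qed

definition lab :: "real \<Rightarrow> real" where
  "lab p = (if p \<in> range x then s (inv x p) 0 else p)"

definition L :: "real \<Rightarrow> real set" where
  "L r = {p. lab p = r}"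

lemma lab_x: "lab (x \<alpha>) = s \<alpha> 0"
  unfolding lab_def using x_inj by (simp add: inv_f_f)

lemma L_disj: "disjoint_family L"
  unfolding disjoint_family_on_def L_def by auto

lemma L_cover: "(\<Union>r. L r) = UNIV"
  unfolding L_def by auto

lemma L_ctbl:
  assumes "I0 \<in> I"
  shows "countable (L r \<inter> I0)"
proof -
  obtain Hs where Hs: "Hs \<in> sets borel" "Hs \<in> I" "I0 \<subseteq> Hs"
    using sa(4) assms by blast
  then have "Hs \<in> FF" using borel_FF by blast
  then obtain \<gamma> where g: "Hs = E \<gamma>" using E by blast
  have "L r \<inter> I0 \<subseteq> x ` insert \<gamma> {\<beta>. lt \<beta> \<gamma>} \<union> {r}"
  proof
    fix p assume p: "p \<in> L r \<inter> I0"
    show "p \<in> x ` insert \<gamma> {\<beta>. lt \<beta> \<gamma>} \<union> {r}"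
    proof (cases "p \<in> range x")
      case True
      then obtain \<alpha> where a: "p = x \<alpha>" by blast
      have "\<not> lt \<gamma> \<alpha>"
      proof
        assume "lt \<gamma> \<alpha>"
        then have "E \<gamma> \<subseteq> J \<alpha>" unfolding J_def using Hs(2) g by blast
        then have "p \<in> J \<alpha>" using p Hs(3) g a by blast
        then show False using x_prop[of \<alpha>] a by simp
      qed
      then have "\<alpha> \<in> insert \<gamma> {\<beta>. lt \<beta> \<gamma>}" using tri[of \<alpha> \<gamma>] by auto
      then show ?thesis using a by blast
    next
      case False
      then have "p = r" using p unfolding L_def lab_def by simp
      then show ?thesis by simp
    qed
  qed
  moreover have "countable (x ` insert \<gamma> {\<beta>. lt \<beta> \<gamma>} \<union> {r})" using ctbl[of \<gamma>] by simp
  ultimately show ?thesis by (rule countable_subset)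
qed

lemma L_strong:
  assumes "B \<in> sets borel" "B \<notin> I"
  shows "\<not> countable (L r \<inter> B)"
proof
  assume cL: "countable (L r \<inter> B)"
  have "B \<in> FF" using borel_FF assms by blast
  then obtain \<delta> where d: "B = E \<delta>" using E by blast
  define S where "S = {\<alpha>. s \<alpha> 0 = r \<and> s \<alpha> 1 = \<delta>}"
  have "x ` S \<subseteq> L r \<inter> B"
  proof
    fix p assume "p \<in> x ` S"
    then obtain \<alpha> where a: "\<alpha> \<in> S" "p = x \<alpha>" by blast
    have "Aset \<alpha> = B" using a(1) d assms unfolding Aset_def S_def by simp
    then have "p \<in> B" using x_prop[of \<alpha>] a by simp
    moreover have "lab p = r" using a lab_x unfolding S_def by simp
    ultimately show "p \<in> L r \<inter> B" unfolding L_def by simp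
  qed
  then have "countable (x ` S)" using cL by (rule countable_subset)
  moreover have "inj_on x S" using x_inj by (rule inj_on_subset) simp
  ultimately have cS: "countable S" by (rule countable_image_inj_on)
  have "UNIV \<subseteq> (\<lambda>\<alpha>. s \<alpha> 2) ` S"
  proof
    fix c :: real
    obtain \<alpha> where a: "(\<lambda>n::nat. if n = 0 then r else if n = 1 then \<delta> else c) = s \<alpha>"
      using s by (metis surjD)
    then have "\<alpha> \<in> S" "c = s \<alpha> 2" unfolding S_def by (auto dest: fun_cong[where x=0] fun_cong[where x=1] fun_cong[where x=2])
    then show "c \<in> (\<lambda>\<alpha>. s \<alpha> 2) ` S" by blast
  qed
  moreover have "countable ((\<lambda>\<alpha>. s \<alpha> 2) ` S)" using cS by simp
  ultimately have "countable (UNIV::real set)" by (rule countable_subset)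
  then show False using uncountable_UNIV_real by simp
qed

lemma L_luzin: "strong_I_Luzin I (L r)"
proof -
  have "\<not> countable (L r \<inter> UNIV)" using UNIV_notin by (intro L_strong) simp_all
  then have "L r \<approx> (UNIV::real set)" using CHa unfolding CH_def by simp
  then show ?thesis unfolding strong_I_Luzin_def I_Luzin_def using L_ctbl L_strong by blast
qed

end


theorem mainTheorem3:
  fixes \<I> :: "real set set"
  assumes "CH"
    and "standing_assumptions \<I>"
  shows "\<exists>L :: real \<Rightarrow> real set.
           disjoint_family L \<and> (\<Union>r. L r) = UNIV \<and> (\<forall>r. strong_I_Luzin \<I> (L r))"
proof -
  obtain lt :: "real \<Rightarrow> real \<Rightarrow> bool" where h: "wf {(x,y). lt x y}" "\<forall>x y. lt x y \<or> x = y \<or> lt y x"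
    "\<forall>x y z. lt x y \<longrightarrow> lt y z \<longrightarrow> lt x z" "\<forall>a. countable {x. lt x a}"
    using CH_wellorder[OF assms(1)] by blast
  interpret constr lt \<I>
  proof
    show "wf {(x,y). lt x y}" by (rule h(1))
    show "\<And>x y. lt x y \<or> x = y \<or> lt y x" using h(2) by blast
    show "\<And>x y z. lt x y \<Longrightarrow> lt y z \<Longrightarrow> lt x z" using h(3) by blast
    show "\<And>a. countable {x. lt x a}" using h(4) by blast
    show "standing_assumptions \<I>" by (rule assms(2))
    show "CH" by (rule assms(1))
  qed
  have "disjoint_family L \<and> (\<Union>r. L r) = UNIV \<and> (\<forall>r. strong_I_Luzin \<I> (L r))"
    using L_disj L_cover L_luzin by blast
  then show ?thesis by (rule exI[of _ L])
qed

end
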